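(* Let $p$ be an odd prime and let $d \geq 3$ be an odd integer. Suppose there exists a positive integer $t$ with $p^t \equiv -1 \pmod d$, and take $t$ minimal. Let $q=p^v \equiv 1 \pmod{2d}$. Then $v=2ts$ for some positive integer $s$. If $s$ is even, then $\omega\big(GP(q,d)\big)<\sqrt{q}$. If $s$ is odd, then $d \mid (\sqrt{q}+1)$ and $\omega\big(GP(q,d)\big)=\sqrt{q}$.
   Context: $GP(q,d)$ is the graph on $\mathbb{F}_q$ in which distinct $x,y$ are adjacent iff $x-y$ is a $d$-th power in $\mathbb{F}_q^*$; $\omega$ denotes clique number. *)

theory Defs
  imports Complex_Main "HOL-Number_Theory.Number_Theory"
begin

definition gp_adj :: "nat \<Rightarrow> 'a::field \<Rightarrow> 'a \<Rightarrow> bool" where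
  "gp_adj d x y \<longleftrightarrow> x \<noteq> y \<and> (\<exists>z. z \<noteq> 0 \<and> x - y = z ^ d)"

definition gp_clique :: "nat \<Rightarrow> 'a::field set \<Rightarrow> bool" where
  "gp_clique d S \<longleftrightarrow> (\<forall>x\<in>S. \<forall>y\<in>S. x \<noteq> y \<longrightarrow> gp_adj d x y)"

definition gp_clique_number :: "'a::{field,finite} itself \<Rightarrow> nat \<Rightarrow> nat" where
  "gp_clique_number _ d = Max {card S | S :: 'a set. gp_clique d S}"

end

theory Submission
  imports Defs "HOL-Computational_Algebra.Polynomial"
begin


lemma ff_power_card:
  fixes x :: "'a :: {field,finite}"
  shows "x ^ card (UNIV :: 'a set) = x"
proof (cases "x = 0")
  case False
  have "x * (\<Prod>y\<in>UNIV-{0}. x * y) = x * x ^ (card (UNIV :: 'a set) - 1) * \<Prod>(UNIV-{0})"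
    by (simp add: prod.distrib mult_ac)
  also have "x * x ^ (card (UNIV :: 'a set) - 1) = x ^ Suc (card (UNIV :: 'a set) - 1)"
    by (subst power_Suc) auto
  also have "Suc (card (UNIV :: 'a set) - 1) = card (UNIV :: 'a set)"
    using finite_UNIV_card_ge_0[where ?'a = 'a] by simp
  also have "(\<Prod>y\<in>UNIV-{0}. x * y) = (\<Prod>y\<in>UNIV-{0}. y)"
    by (rule prod.reindex_bij_witness[of _ "\<lambda>y. y / x" "\<lambda>y. x * y"]) (use False in auto)
  finally show ?thesis
    by simp
qed (use finite_UNIV_card_ge_0[where ?'a = 'a] in auto)

lemma ff_fermat:
  fixes x :: "'a :: {field,finite}"
  assumes "x \<noteq> 0"
  shows "x ^ (card (UNIV :: 'a set) - 1) = 1"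
proof -
  have "x * x ^ (card (UNIV :: 'a set) - 1) = x ^ Suc (card (UNIV :: 'a set) - 1)" by simp
  also have "Suc (card (UNIV :: 'a set) - 1) = card (UNIV :: 'a set)"
    using finite_UNIV_card_ge_0[where ?'a = 'a] by simp
  finally have "x * x ^ (card (UNIV :: 'a set) - 1) = x * 1" using ff_power_card by simp
  thus ?thesis using assms by simp
qed

lemma ff_char_prime: "prime CHAR('a :: {field,finite})"
  using prime_CHAR_semidom finite_imp_CHAR_pos[OF finite_UNIV] by blast

lemma root_card:
  fixes c :: "'a :: idom"
  assumes "n > 0"
  shows "card {z. z ^ n = c} \<le> n"
proof -
  define f where "f = monom (1::'a) n - [:c:]"
  have cf: "coeff f n = 1" using assms by (cases n) (simp_all add: f_def)
  hence "f \<noteq> 0" by auto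
  have "degree f \<le> n" unfolding f_def
    by (metis degree_diff_le degree_monom_le degree_pCons_0 le0)
  moreover have "{z. z ^ n = c} = {x. poly f x = 0}" by (auto simp: f_def poly_monom)
  ultimately show ?thesis using card_poly_roots_bound[OF \<open>f \<noteq> 0\<close>] by simp
qed

definition Dp :: "nat \<Rightarrow> 'a::field set" where
  "Dp d = {y. \<exists>z. z \<noteq> 0 \<and> y = z ^ d}"

lemma Dp_char:
  fixes d :: nat
  assumes "d > 0" "d dvd card (UNIV :: 'a::{field,finite} set) - 1"
  defines "e \<equiv> (card (UNIV :: 'a set) - 1) div d"
  shows "(Dp d :: 'a set) = {y. y \<noteq> 0 \<and> y ^ e = 1}" and "card (Dp d :: 'a set) = e"
proof -
  let ?q = "card (UNIV :: 'a set)"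
  let ?R = "{y::'a. y \<noteq> 0 \<and> y ^ e = 1}"
  have ed: "e * d = ?q - 1" using assms by (simp add: e_def)
  have q1: "?q > 1"
  proof -
    have "(0::'a) \<noteq> 1" by simp
    hence "card {0::'a,1} = 2" by simp
    moreover have "card {0::'a,1} \<le> ?q" by (rule card_mono) auto
    ultimately show ?thesis by linarith
  qed
  have e0: "e > 0" using ed q1 by (cases "e = 0") auto
  have sub: "Dp d \<subseteq> ?R"
  proof
    fix y :: 'a assume "y \<in> Dp d"
    then obtain z where z: "z \<noteq> 0" "y = z ^ d" by (auto simp: Dp_def)
    have "y ^ e = z ^ (e * d)" by (simp add: z power_mult mult.commute)
    also have "\<dots> = 1" using ed ff_fermat[OF z(1)] by simp
    finally show "y \<in> ?R" using z by simp
  qed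
  have "card ?R \<le> card {z::'a. z ^ e = 1}" by (rule card_mono) auto
  hence cR: "card ?R \<le> e"
    using root_card[OF e0, of "1::'a"] by linarith
  have "UNIV - {0::'a} \<subseteq> (\<Union>y\<in>Dp d. {z. z ^ d = y})"
    by (auto simp: Dp_def)
  hence "?q - 1 \<le> card (\<Union>y\<in>(Dp d :: 'a set). {z. z ^ d = y})"
    by (metis card_Diff_singleton card_mono finite_UNIV finite_subset iso_tuple_UNIV_I subset_UNIV)
  also have "\<dots> \<le> (\<Sum>y\<in>(Dp d :: 'a set). card {z. z ^ d = y})"
    by (rule card_UN_le) simp
  also have "\<dots> \<le> card (Dp d :: 'a set) * d"
  proof -
    have "(\<Sum>y\<in>(Dp d :: 'a set). card {z. z ^ d = y}) \<le> of_nat (card (Dp d :: 'a set)) * d"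
      by (rule sum_bounded_above) (rule root_card[OF assms(1)])
    thus ?thesis by simp
  qed
  finally have "e * d \<le> card (Dp d :: 'a set) * d" using ed by simp
  hence "e \<le> card (Dp d :: 'a set)" using assms(1) by simp
  moreover have "card (Dp d :: 'a set) \<le> card ?R" by (rule card_mono[OF _ sub]) simp
  ultimately have "card (Dp d :: 'a set) = card ?R" using cR by linarith
  thus "(Dp d :: 'a set) = ?R" using card_subset_eq[OF _ sub] by simp
  show "card (Dp d :: 'a set) = e" using \<open>e \<le> card (Dp d)\<close> \<open>card (Dp d) \<le> card ?R\<close> cR by linarith
qed



lemma inj_diff:
  fixes S :: "'a::field set"
  assumes "gp_clique d S" "c \<noteq> 0" "c \<notin> Dp d"
  shows "inj_on (\<lambda>(x,y). x - c * y) (S \<times> S)"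
proof (rule inj_onI, clarsimp)
  fix x1 y1 x2 y2
  assume m: "x1 \<in> S" "y1 \<in> S" "x2 \<in> S" "y2 \<in> S" and eq: "x1 - c * y1 = x2 - c * y2"
  have e2: "x1 - x2 = c * (y1 - y2)" using eq by (simp add: algebra_simps)
  show "x1 = x2 \<and> y1 = y2"
  proof (cases "y1 = y2")
    case True thus ?thesis using e2 by simp
  next
    case False
    hence "c * (y1 - y2) \<noteq> 0" using assms(2) by simp
    hence "x1 \<noteq> x2" using e2 by auto
    then obtain w where w: "w \<noteq> 0" "x1 - x2 = w ^ d"
      using assms(1) m unfolding gp_clique_def gp_adj_def by blast
    obtain u where u: "u \<noteq> 0" "y1 - y2 = u ^ d"
      using assms(1) m False unfolding gp_clique_def gp_adj_def by blast
    have "c = (w / u) ^ d" using e2 w u by (simp add: power_divide field_simps)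
    moreover have "w / u \<noteq> 0" using w u by simp
    ultimately have "c \<in> Dp d" unfolding Dp_def by blast
    thus ?thesis using assms(3) by simp
  qed
qed

lemma clique_sq_bound:
  fixes S :: "'a::{field,finite} set" and c :: 'a
  assumes "gp_clique d S" "c \<noteq> 0" "c \<notin> Dp d"
  shows "card S * card S \<le> card (UNIV :: 'a set)"
proof -
  have "card S * card S = card ((\<lambda>(x,y). x - c * y) ` (S \<times> S))"
    using card_image[OF inj_diff[OF assms]] by (simp add: card_cartesian_product)
  also have "\<dots> \<le> card (UNIV :: 'a set)" by (rule card_mono) auto
  finally show ?thesis .
qed

lemma clique_eq_core:
  fixes S :: "'a::{field,finite} set" and c0 :: 'a
  assumes cl: "gp_clique d S" and c0: "c0 \<noteq> 0" "c0 \<notin> Dp d"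
    and cS: "card S = m" and mm: "m * m = card (UNIV :: 'a set)" and m2: "2 \<le> m"
    and d0: "d > 0" and dq: "d dvd card (UNIV :: 'a set) - 1" and S0: "0 \<in> S"
  shows "d dvd m + 1"
proof -
  let ?q = "card (UNIV :: 'a set)"
  define e where "e = (?q - 1) div d"
  have ed: "e * d = ?q - 1" using dq by (simp add: e_def)
  have cD: "card (Dp d :: 'a set) = e" using Dp_char(2)[OF d0 dq] by (simp add: e_def)
  define C where "C = (\<lambda>y. c0 * y) ` (Dp d :: 'a set)"
  have cC: "card C = e" unfolding C_def using cD c0(1)
    by (subst card_image) (auto intro: inj_onI)
  have C_notD: "c \<notin> Dp d" if "c \<in> C" for c
  proof
    assume "c \<in> Dp d"
    then obtain w where w: "w \<noteq> 0" "c = w ^ d" by (auto simp: Dp_def)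
    obtain u where u: "u \<noteq> 0" "c = c0 * u ^ d" using \<open>c \<in> C\<close> by (auto simp: C_def Dp_def)
    have "c0 = (w / u) ^ d" using w u by (simp add: power_divide field_simps)
    moreover have "w / u \<noteq> 0" using w u by simp
    ultimately have "c0 \<in> Dp d" unfolding Dp_def by blast
    thus False using c0 by simp
  qed
  have C0: "c \<noteq> 0" if "c \<in> C" for c using that c0(1) by (auto simp: C_def Dp_def)
  have "S \<noteq> UNIV"
  proof
    assume "S = UNIV"
    hence "m = m * m" using cS mm by metis
    hence "m * 1 = m * m" by simp
    hence "1 = m" using m2 by (subst (asm) mult_left_cancel) auto
    thus False using m2 by simp
  qed
  then obtain z where z: "z \<notin> S" by auto
  have SD: "y \<in> Dp d" if "y \<in> S" "y \<noteq> 0" for y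
  proof -
    have "gp_adj d y 0" using cl that S0 unfolding gp_clique_def by simp
    then obtain w where "w \<noteq> 0" "y - 0 = w ^ d"
      unfolding gp_adj_def by blast
    thus ?thesis unfolding Dp_def by auto
  qed
  define P where "P = {(x,y). x \<in> S \<and> y \<in> S - {0} \<and> (x - z) / y \<in> C}"
  have bij: "bij_betw (\<lambda>(x,y). (x - z) / y) P C"
  proof (rule bij_betw_imageI)
    show "inj_on (\<lambda>(x,y). (x - z) / y) P"
    proof (rule inj_onI)
      fix a b assume aP: "a \<in> P" and bP: "b \<in> P"
        and ab: "(\<lambda>(x,y). (x - z) / y) a = (\<lambda>(x,y). (x - z) / y) b"
      obtain x1 y1 where a: "a = (x1,y1)" by (cases a)
      obtain x2 y2 where b: "b = (x2,y2)" by (cases b)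
      have h: "x1 \<in> S" "y1 \<in> S" "y1 \<noteq> 0" "(x1 - z) / y1 \<in> C" "x2 \<in> S" "y2 \<in> S" "y2 \<noteq> 0"
        "(x2 - z) / y2 \<in> C" "(x1 - z) / y1 = (x2 - z) / y2"
        using aP bP ab unfolding a b P_def by auto
      define c where "c = (x1 - z) / y1"
      have "x1 - c * y1 = z" using h(3) by (simp add: c_def)
      moreover have "x2 - c * y2 = z" using h(7,9) by (simp add: c_def)
      ultimately have "(\<lambda>(x,y). x - c * y) (x1,y1) = (\<lambda>(x,y). x - c * y) (x2,y2)" by simp
      moreover have "c \<in> C" using h by (simp add: c_def)
      ultimately have "x1 = x2 \<and> y1 = y2"
        using inj_diff[OF cl C0 C_notD, of c] h unfolding inj_on_def by blast
      thus "a = b" using a b by simp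
    qed
    show "(\<lambda>(x,y). (x - z) / y) ` P = C"
    proof
      show "(\<lambda>(x,y). (x - z) / y) ` P \<subseteq> C" by (auto simp: P_def)
      show "C \<subseteq> (\<lambda>(x,y). (x - z) / y) ` P"
      proof
        fix c assume c: "c \<in> C"
        have inj: "inj_on (\<lambda>(x,y). x - c * y) (S \<times> S)" by (rule inj_diff[OF cl C0[OF c] C_notD[OF c]])
        have "card ((\<lambda>(x,y). x - c * y) ` (S \<times> S)) = card (UNIV :: 'a set)"
          using card_image[OF inj] cS mm by (simp add: card_cartesian_product)
        hence "(\<lambda>(x,y). x - c * y) ` (S \<times> S) = UNIV"
          by (metis card_subset_eq finite_UNIV subset_UNIV)
        hence "z \<in> (\<lambda>(x,y). x - c * y) ` (S \<times> S)" by simp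
        then obtain pr where pr: "pr \<in> S \<times> S" "z = (\<lambda>(x,y). x - c * y) pr" by (rule imageE)
        obtain x y where xy0: "pr = (x,y)" by (cases pr)
        have xy: "x \<in> S" "y \<in> S" "z = x - c * y" using pr unfolding xy0 by auto
        have y0: "y \<noteq> 0" using xy z by auto
        have "(x - z) / y = c" using xy y0 by simp
        thus "c \<in> (\<lambda>(x,y). (x - z) / y) ` P"
          using xy y0 c by (auto simp: P_def intro!: image_eqI[of _ _ "(x,y)"])
      qed
    qed
  qed
  define N where "N = {x \<in> S. x - z \<in> C}"
  have PN: "P = N \<times> (S - {0})"
  proof -
    have "(x - z) / y \<in> C \<longleftrightarrow> x - z \<in> C" if yS: "y \<in> S" "y \<noteq> 0" for x y
    proof -
      obtain w where w: "w \<noteq> 0" "y = w ^ d" using SD[OF yS] by (auto simp: Dp_def)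
      show ?thesis
      proof
        assume "(x - z) / y \<in> C"
        then obtain u where u: "u \<noteq> 0" "(x - z) / y = c0 * u ^ d" by (auto simp: C_def Dp_def)
        have "x - z = ((x - z) / y) * y" using yS(2) by simp
        also have "\<dots> = c0 * (u * w) ^ d" using u w by (simp add: power_mult_distrib mult.assoc)
        finally have "x - z = c0 * (u * w) ^ d" .
        moreover have "(u * w) ^ d \<in> Dp d" using u w unfolding Dp_def by (intro CollectI exI[of _ "u * w"]) simp
        ultimately show "x - z \<in> C" unfolding C_def by blast
      next
        assume "x - z \<in> C"
        then obtain u where u: "u \<noteq> 0" "x - z = c0 * u ^ d" by (auto simp: C_def Dp_def)
        have "(x - z) / y = c0 * (u / w) ^ d" using u w yS(2)
          by (simp add: power_divide)
        moreover have "(u / w) ^ d \<in> Dp d" using u w unfolding Dp_def by (intro CollectI exI[of _ "u / w"]) simp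
        ultimately show "(x - z) / y \<in> C" unfolding C_def by blast
      qed
    qed
    thus ?thesis unfolding P_def N_def by auto
  qed
  have "card P = e" using bij_betw_same_card[OF bij] cC by simp
  hence "card N * (m - 1) = e" using PN cS S0 by (simp add: card_cartesian_product)
  hence "card N * (m - 1) * d = (m - 1) * (m + 1)"
    using ed mm by (simp add: algebra_simps)
  hence "(card N * d) * (m - 1) = (m + 1) * (m - 1)" by (simp add: mult_ac)
  moreover have "m - 1 \<noteq> 0" using m2 by simp
  ultimately have "card N * d = m + 1" by (metis mult_right_cancel)
  thus ?thesis by (metis dvd_triv_right)
qed

lemma clique_eq:
  fixes S :: "'a::{field,finite} set" and c0 :: 'a
  assumes cl: "gp_clique d S" and c0: "c0 \<noteq> 0" "c0 \<notin> Dp d"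
    and cS: "card S = m" and mm: "m * m = card (UNIV :: 'a set)" and m2: "2 \<le> m"
    and d0: "d > 0" and dq: "d dvd card (UNIV :: 'a set) - 1"
  shows "d dvd m + 1"
proof -
  from cS m2 have "S \<noteq> {}" by auto
  then obtain a where a: "a \<in> S" by blast
  define S' where "S' = (\<lambda>x. x - a) ` S"
  have "card S' = m" unfolding S'_def using cS by (subst card_image) (auto intro: inj_onI)
  moreover have "0 \<in> S'" using a by (auto simp: S'_def)
  moreover have "gp_clique d S'"
    using cl unfolding S'_def gp_clique_def gp_adj_def by auto
  ultimately show ?thesis using clique_eq_core[OF _ c0 _ mm m2 d0 dq] by blast
qed



lemma subfield_card:
  fixes m :: nat
  assumes m2: "2 \<le> m" and mm: "m * m = card (UNIV :: 'a::{field,finite} set)"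
  shows "m \<le> card {x::'a. x ^ m = x}"
proof -
  let ?q = "card (UNIV :: 'a set)"
  let ?K = "{x::'a. x ^ m = x}"
  define h where "h = (\<Sum>j\<le>m. monom (1::'a) ((m - 1) * j))"
  have ph: "poly h a = (\<Sum>j\<le>m. (a ^ (m - 1)) ^ j)" for a
    by (simp add: h_def poly_sum poly_monom power_mult)
  have ident: "(a ^ m - a) * poly h a = a ^ ?q - a" for a :: 'a
  proof -
    have "a ^ m = a * a ^ (m - 1)" using m2 by (metis One_nat_def Suc_pred' less_le_trans pos2 power_Suc)
    hence "a ^ m - a = a * (a ^ (m - 1) - 1)" by (simp add: algebra_simps)
    moreover have "(a ^ (m - 1) - 1) * (\<Sum>j\<le>m. (a ^ (m - 1)) ^ j) = (a ^ (m - 1)) ^ Suc m - 1"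
      using power_diff_1_eq[of "a ^ (m - 1)" "Suc m"] by (simp add: lessThan_Suc_atMost)
    ultimately have "(a ^ m - a) * poly h a = a * ((a ^ (m - 1)) ^ Suc m - 1)"
      by (simp add: ph mult.assoc)
    also have "\<dots> = a * a ^ ((m - 1) * Suc m) - a" by (simp only: power_mult right_diff_distrib mult_1_right)
    also have "\<dots> = a ^ Suc ((m - 1) * Suc m) - a" by simp
    also have "Suc ((m - 1) * Suc m) = m * m"
      using m2 by (cases m) (simp_all add: algebra_simps)
    finally show ?thesis using mm by simp
  qed
  have h0: "h \<noteq> 0"
  proof
    assume "h = 0"
    hence "poly h 0 = 0" by simp
    moreover have "poly h 0 = 1"
    proof -
      have "poly h 0 = (\<Sum>j\<le>m. (0::'a) ^ ((m - 1) * j))" by (simp add: ph power_mult)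
      also have "\<dots> = (\<Sum>j\<le>m. if j = 0 then 1 else 0)"
        using m2 by (intro sum.cong) auto
      also have "\<dots> = 1" by simp
      finally show ?thesis .
    qed
    ultimately show False by simp
  qed
  have dh: "degree h \<le> (m - 1) * m"
    unfolding h_def by (rule degree_sum_le) (auto intro: order_trans[OF degree_monom_le])
  have "UNIV \<subseteq> ?K \<union> {a. poly h a = 0}"
  proof
    fix a :: 'a
    have "(a ^ m - a) * poly h a = 0" using ident[of a] ff_power_card[of a] by simp
    thus "a \<in> ?K \<union> {a. poly h a = 0}" by auto
  qed
  hence "?q \<le> card (?K \<union> {a. poly h a = 0})" by (intro card_mono) auto
  also have "\<dots> \<le> card ?K + card {a. poly h a = 0}" by (rule card_Un_le)
  also have "card {a. poly h a = 0} \<le> (m - 1) * m" using card_poly_roots_bound[OF h0] dh by linarith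
  finally have "m * m \<le> card ?K + (m - 1) * m" using mm by linarith
  moreover have "(m - 1) * m + m = m * m" using m2 by (cases m) auto
  ultimately show ?thesis by linarith
qed

lemma subfield_clique:
  fixes m k p d :: nat
  assumes ch: "CHAR('a::{field,finite}) = p" and op: "odd p" and mk: "m = p ^ k"
    and m2: "2 \<le> m" and mm: "m * m = card (UNIV :: 'a set)" and d0: "d > 0" and dm: "d dvd m + 1"
  shows "gp_clique d {x::'a. x ^ m = x}"
proof -
  let ?q = "card (UNIV :: 'a set)"
  have q1: "?q - 1 = (m - 1) * (m + 1)" using mm m2 by (simp add: algebra_simps diff_mult_distrib)
  have dq: "d dvd ?q - 1" unfolding q1 using dm by (rule dvd_mult)
  have e: "(?q - 1) div d = (m - 1) * ((m + 1) div d)" using q1 dm d0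
    by (metis div_mult_swap)
  have oddm: "odd m" using op mk by simp
  have pc: "prime CHAR('a)" by (rule ff_char_prime)
  show ?thesis unfolding gp_clique_def
  proof (intro ballI impI)
    fix x y :: 'a
    assume xK: "x \<in> {x. x ^ m = x}" and yK: "y \<in> {x. x ^ m = x}" and xy: "x \<noteq> y"
    define w where "w = x - y"
    have "w ^ m = (x + (- y)) ^ m" by (simp add: w_def)
    also have "\<dots> = x ^ m + (- y) ^ m"
      by (rule freshmans_dream'[OF pc]) (use ch mk in simp)
    also have "\<dots> = w" using xK yK oddm by (simp add: w_def)
    finally have wm: "w ^ m = w" .
    have w0: "w \<noteq> 0" using xy by (simp add: w_def)
    have "w * w ^ (m - 1) = w * 1"
      using wm m2 by (metis One_nat_def Suc_pred' less_le_trans pos2 power_Suc mult_1_right)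
    hence wm1: "w ^ (m - 1) = 1" using w0 by simp
    have "w ^ ((?q - 1) div d) = 1" unfolding e power_mult wm1 by simp
    hence "w \<in> Dp d" using Dp_char(1)[OF d0 dq] w0 by simp
    then obtain z where "z \<noteq> 0" "w = z ^ d" by (auto simp: Dp_def)
    thus "gp_adj d x y" using xy unfolding gp_adj_def w_def by blast
  qed
qed



lemma congH1:
  fixes x y :: int
  assumes "[x ^ a = 1] (mod n)" "[x ^ (a + c) = y] (mod n)"
  shows "[x ^ c = y] (mod n)"
proof -
  have "[x ^ a * x ^ c = 1 * x ^ c] (mod n)" by (rule cong_scalar_right[OF assms(1)])
  hence "[x ^ c = x ^ (a + c)] (mod n)" by (simp add: power_add cong_sym)
  thus ?thesis using assms(2) by (rule cong_trans)
qed

lemma congH2: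
  fixes x :: int
  assumes "[x ^ a = -1] (mod n)" "[x ^ (a + c) = 1] (mod n)"
  shows "[x ^ c = -1] (mod n)"
proof -
  have "[x ^ a * x ^ c = (-1) * x ^ c] (mod n)" by (rule cong_scalar_right[OF assms(1)])
  hence "[- (x ^ c) = x ^ (a + c)] (mod n)" by (simp add: power_add cong_sym)
  hence "[- (x ^ c) = 1] (mod n)" using assms(2) by (rule cong_trans)
  hence "[(-1) * (- (x ^ c)) = (-1) * 1] (mod n)" by (rule cong_scalar_left)
  thus ?thesis by simp
qed

lemma order_lemma:
  fixes p d t v :: nat
  assumes d3: "d \<ge> 3" and t0: "t > 0" and pt: "[int p ^ t = -1] (mod int d)"
    and mn: "\<forall>t'. 0 < t' \<and> t' < t \<longrightarrow> \<not> [int p ^ t' = -1] (mod int d)"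
    and pv: "[int p ^ v = 1] (mod int d)"
  shows "2 * t dvd v"
proof -
  have p2t: "[int p ^ (2 * t) = 1] (mod int d)"
    using cong_pow[OF pt, of 2] by (simp add: power_mult mult.commute)
  define a where "a = v div (2 * t)"
  define b where "b = v mod (2 * t)"
  have vab: "v = 2 * t * a + b" by (simp add: a_def b_def)
  have bl: "b < 2 * t" using t0 by (simp add: b_def)
  have "[int p ^ (2 * t * a) = 1] (mod int d)"
    using cong_pow[OF p2t, of a] by (simp add: power_mult)
  hence pb: "[int p ^ b = 1] (mod int d)" using pv vab congH1 by metis
  have not12: "\<not> [1 = -1] (mod int d)"
  proof
    assume "[1 = -1] (mod int d)"
    hence "int d dvd 2" by (simp add: cong_iff_dvd_diff)
    hence "d dvd 2" by presburger
    thus False using d3 by (metis dvd_imp_le le_trans numeral_le_iff semiring_norm(69) zero_less_numeral not_less_eq_eq One_nat_def Suc_1 eval_nat_numeral(3) Suc_n_not_le_n)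
  qed
  have "b = 0"
  proof (rule ccontr)
    assume b0: "b \<noteq> 0"
    consider "b < t" | "b = t" | "b > t" by linarith
    thus False
    proof cases
      case 1
      have "[int p ^ (b + (t - b)) = -1] (mod int d)" using 1 pt by simp
      hence "[int p ^ (t - b) = -1] (mod int d)" using pb congH1 by blast
      thus False using mn 1 b0 by auto
    next
      case 2
      hence "[1 = -1] (mod int d)" using pb pt by (metis cong_sym cong_trans)
      thus False using not12 by simp
    next
      case 3
      have "[int p ^ (t + (b - t)) = 1] (mod int d)" using 3 pb by simp
      hence "[int p ^ (b - t) = -1] (mod int d)" using pt congH2 by blast
      thus False using mn 3 bl by auto
    qed
  qed
  thus ?thesis using vab by simp
qed



theorem proposition4p6:
  fixes p d t v :: nat
  assumes "prime p" and "odd p"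
    and "odd d" and "d \<ge> 3"
    and "t > 0" and "[int p ^ t = -1] (mod int d)"
    and "\<forall>t'. 0 < t' \<and> t' < t \<longrightarrow> \<not> [int p ^ t' = -1] (mod int d)"
    and "v > 0" and "[p ^ v = 1] (mod (2 * d))"
    and "card (UNIV :: 'a::{field,finite} set) = p ^ v"
  shows "\<exists>s>0. v = 2 * t * s
           \<and> (even s \<longrightarrow> real (gp_clique_number TYPE('a) d) < sqrt (real (p ^ v)))
           \<and> (odd s \<longrightarrow> d dvd (p ^ (t * s) + 1)
                 \<and> real (gp_clique_number TYPE('a) d) = sqrt (real (p ^ v)))"
proof -
  note pr = assms(1) and op = assms(2) and d3 = assms(4) and t0 = assms(5) and pt = assms(6)
    and mn = assms(7) and v0 = assms(8) and pv = assms(9) and cq = assms(10)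
  let ?q = "card (UNIV :: 'a set)"
  have pvd: "[p ^ v = 1] (mod d)" using pv by (rule cong_dvd_modulus_nat) simp
  have pvi: "[int p ^ v = 1] (mod int d)"
    using pvd cong_int_iff[of "p ^ v" 1 d] by simp
  have "2 * t dvd v" by (rule order_lemma[OF d3 t0 pt mn pvi])
  then obtain s where vs: "v = 2 * t * s" by blast
  have s0: "s > 0" using vs v0 by (cases s) auto
  define m where "m = p ^ (t * s)"
  have p2: "p \<ge> 2" using pr by (simp add: prime_ge_2_nat)
  have m2: "m \<ge> 2"
  proof -
    have "p ^ 1 \<le> p ^ (t * s)" using p2 t0 s0 by (intro power_increasing) auto
    thus ?thesis using p2 by (simp add: m_def)
  qed
  have "v = t * s + t * s" using vs by simp
  hence pvm: "p ^ v = m * m" by (simp add: m_def power_add)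
  have mm: "m * m = ?q" using cq pvm by simp
  have sq: "sqrt (real (p ^ v)) = real m" using pvm by simp
  have ch: "CHAR('a) = p"
  proof -
    have "CHAR('a) dvd p ^ v" using CHAR_dvd_CARD[where 'a='a] cq by simp
    hence "CHAR('a) dvd p" using ff_char_prime[where 'a='a] prime_dvd_power by blast
    thus ?thesis using ff_char_prime[where 'a='a] pr primes_dvd_imp_eq by blast
  qed
  have dq: "d dvd ?q - 1"
  proof -
    have "2 * d dvd p ^ v - 1" using cong_to_1_nat[OF pv] .
    thus ?thesis using cq by (metis dvd_mult_right)
  qed
  have d0: "d > 0" using d3 by simp
  define e where "e = (?q - 1) div d"
  have ed: "e * d = ?q - 1" using dq by (simp add: e_def)
  have cD: "card (Dp d :: 'a set) = e" using Dp_char(2)[OF d0 dq] by (simp add: e_def)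
  have q1: "?q - 1 > 0" using mm m2 by (metis One_nat_def diff_is_0_eq le_trans mult_le_mono nat_less_le not_gr0 numeral_le_one_iff semiring_norm(69) one_le_numeral Suc_1 less_2_cases_iff mult_1)
  have eq: "e < ?q - 1"
  proof -
    have "e > 0" using ed q1 by (cases e) auto
    hence "e * 1 < e * d" using d3 by simp
    thus ?thesis using ed by simp
  qed
  obtain c0 :: 'a where c0: "c0 \<noteq> 0" "c0 \<notin> Dp d"
  proof -
    have "\<not> (UNIV - {0::'a}) \<subseteq> Dp d"
    proof
      assume "UNIV - {0::'a} \<subseteq> Dp d"
      hence "card (UNIV - {0::'a}) \<le> card (Dp d :: 'a set)" by (intro card_mono) auto
      thus False using eq cD by (simp add: card_Diff_singleton)
    qed
    thus ?thesis using that by blast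
  qed
  define W where "W = {card S | S :: 'a set. gp_clique d S}"
  have om: "gp_clique_number TYPE('a) d = Max W" by (simp add: gp_clique_number_def W_def)
  have Wfin: "finite W"
  proof (rule finite_subset)
    show "W \<subseteq> {..?q}" unfolding W_def by (auto intro: card_mono)
  qed simp
  have Wne: "W \<noteq> {}" unfolding W_def gp_clique_def by auto
  have bound: "card S \<le> m" if "gp_clique d S" for S :: "'a set"
  proof (rule ccontr)
    assume "\<not> card S \<le> m"
    hence "m * m < card S * card S" by (simp add: mult_strict_mono)
    thus False using clique_sq_bound[OF that c0] mm by simp
  qed
  have Wle: "Max W \<le> m" using Wfin Wne bound by (auto simp: W_def)
  have pts: "[int p ^ (t * s) = (-1) ^ s] (mod int d)"
    using cong_pow[OF pt, of s] by (simp add: power_mult)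
  show ?thesis
  proof (intro exI[of _ s] conjI impI)
    show "s > 0" by fact
    show "v = 2 * t * s" by fact
  next
    assume es: "even s"
    have "[int m = 1] (mod int d)" using pts es by (simp add: m_def)
    hence dm1: "int d dvd int m - 1" by (simp add: cong_iff_dvd_diff)
    have "card S < m" if "gp_clique d S" for S :: "'a set"
    proof -
      have "card S \<noteq> m"
      proof
        assume "card S = m"
        hence "d dvd m + 1" using clique_eq[OF that c0 _ mm m2 d0 dq] by blast
        hence "int d dvd int m + 1" by (metis of_nat_1 of_nat_add of_nat_dvd_iff)
        hence "int d dvd (int m + 1) - (int m - 1)" using dm1 by (rule dvd_diff)
        hence "int d dvd 2" by simp
        hence "d dvd 2" by presburger
        thus False using d3 by (metis dvd_imp_le le_trans numeral_le_iff semiring_norm(69) zero_less_numeral not_less_eq_eq One_nat_def Suc_1 eval_nat_numeral(3) Suc_n_not_le_n)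
      qed
      thus ?thesis using bound[OF that] by simp
    qed
    hence "Max W < m" using Wfin Wne by (auto simp: W_def)
    thus "real (gp_clique_number TYPE('a) d) < sqrt (real (p ^ v))" using om sq by simp
  next
    assume os: "odd s"
    have "[int m = -1] (mod int d)" using pts os by (simp add: m_def)
    hence "int d dvd int m + 1" by (simp add: cong_iff_dvd_diff)
    hence dm: "d dvd m + 1" by (metis of_nat_1 of_nat_add of_nat_dvd_iff)
    thus "d dvd p ^ (t * s) + 1" by (simp add: m_def)
    have "gp_clique d {x::'a. x ^ m = x}"
      by (rule subfield_clique[OF ch op m_def m2 mm d0 dm])
    hence "card {x::'a. x ^ m = x} \<in> W" unfolding W_def by blast
    hence "card {x::'a. x ^ m = x} \<le> Max W" using Wfin by simp
    hence "m \<le> Max W" using subfield_card[OF m2 mm] by linarith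
    hence "Max W = m" using Wle by simp
    thus "real (gp_clique_number TYPE('a) d) = sqrt (real (p ^ v))" using om sq by simp
  qed
qed

end
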